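(* Let $n>3$ and let $(\mathcal{P},\cdot,\{-,-\})$ be an $n$-dimensional complex Poisson algebra such that $(\mathcal{P},\cdot)$ is filiform. Then $(\mathcal{P},\cdot,\{-,-\})$ is isomorphic to one of the following algebras with basis $e_1,\dots,e_n$, where in each case $e_i\cdot e_j=e_{i+j}$ for $2\le i+j\le n-1$, the listed products are the only further nonzero ones (up to commutativity of $\cdot$ and anticommutativity of $\{-,-\}$): $\mathcal{P}_{1,1}^n$: no further products; $\mathcal{P}_{1,2}^n$: $\{e_1,e_n\}=e_n$; $\mathcal{P}_{1,3}^n$: $\{e_1,e_n\}=e_{n-1}$; $\mathcal{P}_{1,4}^n$: $e_n\cdot e_n=e_{n-1}$; $\mathcal{P}_{1,5}^n$: $e_n\cdot e_n=e_{n-1}$, $\{e_1,e_n\}=e_{n-1}$.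
   Context: A Poisson algebra is a vector space with a commutative associative product $\cdot$ and a Lie bracket $\{-,-\}$ satisfying $\{x\cdot y,z\}=\{x,z\}\cdot y+x\cdot\{y,z\}$. An $n$-dimensional algebra $\mathcal{P}$ is filiform if $\dim\mathcal{P}^i=n-i$ for $2\le i\le n$, where $\mathcal{P}^1=\mathcal{P}$ and $\mathcal{P}^{k+1}=\mathcal{P}^k\cdot\mathcal{P}$. *)

theory Defs
  imports Complex_Main "HOL-Library.Function_Algebras"
begin

(* An algebra over C is given by a type 'v with a C-scalar multiplication sc
   (a vector space structure), a product m and a bracket b. *)

definition bilinear_op :: "(complex \<Rightarrow> 'v::ab_group_add \<Rightarrow> 'v) \<Rightarrow> ('v \<Rightarrow> 'v \<Rightarrow> 'v) \<Rightarrow> bool" where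
  "bilinear_op sc p \<longleftrightarrow>
     (\<forall>x. Vector_Spaces.linear sc sc (p x)) \<and> (\<forall>y. Vector_Spaces.linear sc sc (\<lambda>x. p x y))"

definition poisson_algebra ::
  "(complex \<Rightarrow> 'v::ab_group_add \<Rightarrow> 'v) \<Rightarrow> ('v \<Rightarrow> 'v \<Rightarrow> 'v) \<Rightarrow> ('v \<Rightarrow> 'v \<Rightarrow> 'v) \<Rightarrow> bool" where
  "poisson_algebra sc m b \<longleftrightarrow>
     vector_space sc \<and> bilinear_op sc m \<and> bilinear_op sc b \<and>
     (\<forall>x y. m x y = m y x) \<and>
     (\<forall>x y z. m (m x y) z = m x (m y z)) \<and>
     (\<forall>x. b x x = 0) \<and>
     (\<forall>x y z. b x (b y z) + b y (b z x) + b z (b x y) = 0) \<and>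
     (\<forall>x y z. b (m x y) z = m (b x z) y + m x (b y z))"

definition n_dimensional :: "(complex \<Rightarrow> 'v::ab_group_add \<Rightarrow> 'v) \<Rightarrow> nat \<Rightarrow> bool" where
  "n_dimensional sc n \<longleftrightarrow>
     (\<exists>B. finite B \<and> \<not> module.dependent sc B \<and> module.span sc B = UNIV \<and> card B = n)"

fun alg_pow :: "(complex \<Rightarrow> 'v::ab_group_add \<Rightarrow> 'v) \<Rightarrow> ('v \<Rightarrow> 'v \<Rightarrow> 'v) \<Rightarrow> nat \<Rightarrow> 'v set" where
  "alg_pow sc m 0 = UNIV"
| "alg_pow sc m (Suc 0) = UNIV"
| "alg_pow sc m (Suc (Suc k)) =
     module.span sc {m x y | x y. x \<in> alg_pow sc m (Suc k)}"

definition filiform :: "(complex \<Rightarrow> 'v::ab_group_add \<Rightarrow> 'v) \<Rightarrow> ('v \<Rightarrow> 'v \<Rightarrow> 'v) \<Rightarrow> nat \<Rightarrow> bool" where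
  "filiform sc m n \<longleftrightarrow>
     (\<forall>i\<in>{2..n}. vector_space.dim sc (alg_pow sc m i) = n - i)"

(* Model algebras P_{1,k}^n on the coordinate space of functions nat => complex
   supported in {1..n}; e i is the i-th standard basis vector. *)

definition cscale :: "complex \<Rightarrow> (nat \<Rightarrow> complex) \<Rightarrow> (nat \<Rightarrow> complex)" where
  "cscale a c = (\<lambda>l. a * c l)"

definition coord_space :: "nat \<Rightarrow> (nat \<Rightarrow> complex) set" where
  "coord_space n = {c. \<forall>l. l \<notin> {1..n} \<longrightarrow> c l = 0}"

definition ebas :: "nat \<Rightarrow> (nat \<Rightarrow> complex)" where
  "ebas i = (\<lambda>l. if l = i then 1 else 0)"

definition mult_tab :: "nat \<Rightarrow> nat \<Rightarrow> nat \<Rightarrow> nat \<Rightarrow> (nat \<Rightarrow> complex)" where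
  "mult_tab n k i j =
     (if 2 \<le> i + j \<and> i + j \<le> n - 1 then ebas (i + j) else 0)
     + (if k \<in> {4, 5} \<and> i = n \<and> j = n then ebas (n - 1) else 0)"

definition brack_tab :: "nat \<Rightarrow> nat \<Rightarrow> nat \<Rightarrow> nat \<Rightarrow> (nat \<Rightarrow> complex)" where
  "brack_tab n k i j =
     (if k = 2 then
        (if i = 1 \<and> j = n then ebas n else if i = n \<and> j = 1 then - ebas n else 0)
      else if k \<in> {3, 5} then
        (if i = 1 \<and> j = n then ebas (n - 1) else if i = n \<and> j = 1 then - ebas (n - 1) else 0)
      else 0)"

definition extend_tab :: "nat \<Rightarrow> (nat \<Rightarrow> nat \<Rightarrow> (nat \<Rightarrow> complex))
    \<Rightarrow> (nat \<Rightarrow> complex) \<Rightarrow> (nat \<Rightarrow> complex) \<Rightarrow> (nat \<Rightarrow> complex)" where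
  "extend_tab n T c d = (\<Sum>i\<in>{1..n}. \<Sum>j\<in>{1..n}. cscale (c i * d j) (T i j))"

definition model_mult :: "nat \<Rightarrow> nat \<Rightarrow> (nat \<Rightarrow> complex) \<Rightarrow> (nat \<Rightarrow> complex) \<Rightarrow> (nat \<Rightarrow> complex)" where
  "model_mult n k = extend_tab n (mult_tab n k)"

definition model_brack :: "nat \<Rightarrow> nat \<Rightarrow> (nat \<Rightarrow> complex) \<Rightarrow> (nat \<Rightarrow> complex) \<Rightarrow> (nat \<Rightarrow> complex)" where
  "model_brack n k = extend_tab n (brack_tab n k)"

definition iso_to_model ::
  "(complex \<Rightarrow> 'v::ab_group_add \<Rightarrow> 'v) \<Rightarrow> ('v \<Rightarrow> 'v \<Rightarrow> 'v) \<Rightarrow> ('v \<Rightarrow> 'v \<Rightarrow> 'v)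
    \<Rightarrow> nat \<Rightarrow> nat \<Rightarrow> ('v \<Rightarrow> (nat \<Rightarrow> complex)) \<Rightarrow> bool" where
  "iso_to_model sc m b n k f \<longleftrightarrow>
     Vector_Spaces.linear sc cscale f \<and> bij_betw f UNIV (coord_space n) \<and>
     (\<forall>x y. f (m x y) = model_mult n k (f x) (f y)) \<and>
     (\<forall>x y. f (b x y) = model_brack n k (f x) (f y))"

end

theory Submission
  imports Defs
begin

lemma vs_cscale: "vector_space cscale"
  by unfold_locales (auto simp: cscale_def fun_eq_iff algebra_simps)

lemma fun_sum_apply: "(\<Sum>i\<in>A. F i) (l::nat) = (\<Sum>i\<in>A. (F i l :: complex))"
  by (induct A rule: infinite_finite_induct) auto

lemma coord_add: "c \<in> coord_space n \<Longrightarrow> d \<in> coord_space n \<Longrightarrow> c + d \<in> coord_space n"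
  by (simp add: coord_space_def)
lemma coord_neg: "c \<in> coord_space n \<Longrightarrow> - c \<in> coord_space n"
  by (simp add: coord_space_def)
lemma coord_0: "0 \<in> coord_space n"
  by (simp add: coord_space_def)
lemma coord_sc: "c \<in> coord_space n \<Longrightarrow> cscale a c \<in> coord_space n"
  by (simp add: coord_space_def cscale_def)
lemma coord_sum: "(\<And>i. i \<in> A \<Longrightarrow> F i \<in> coord_space n) \<Longrightarrow> (\<Sum>i\<in>A. F i) \<in> coord_space n"
  by (induct A rule: infinite_finite_induct) (auto intro: coord_add coord_0)
lemma coord_ebas: "l \<in> {1..n} \<Longrightarrow> ebas l \<in> coord_space n"
  by (auto simp: coord_space_def ebas_def)

lemma coord_mult_tab: "i \<in> {1..n} \<Longrightarrow> j \<in> {1..n} \<Longrightarrow> n > 3 \<Longrightarrow> mult_tab n k i j \<in> coord_space n"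
  unfolding mult_tab_def by (intro coord_add) (auto intro: coord_ebas coord_0)
lemma coord_brack_tab: "i \<in> {1..n} \<Longrightarrow> j \<in> {1..n} \<Longrightarrow> n > 3 \<Longrightarrow> brack_tab n k i j \<in> coord_space n"
  unfolding brack_tab_def by (auto intro!: coord_ebas coord_0 coord_neg)

lemma coord_extend: "(\<And>i j. i \<in> {1..n} \<Longrightarrow> j \<in> {1..n} \<Longrightarrow> T i j \<in> coord_space n) \<Longrightarrow> extend_tab n T c d \<in> coord_space n"
  unfolding extend_tab_def by (intro coord_sum coord_sc) auto

fun pw :: "('v::zero \<Rightarrow> 'v \<Rightarrow> 'v) \<Rightarrow> 'v \<Rightarrow> nat \<Rightarrow> 'v" where
  "pw m x 0 = 0"
| "pw m x (Suc 0) = x"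
| "pw m x (Suc (Suc k)) = m (pw m x (Suc k)) x"

locale PA = vector_space sc for sc :: "complex \<Rightarrow> 'v::ab_group_add \<Rightarrow> 'v" +
  fixes m b :: "'v \<Rightarrow> 'v \<Rightarrow> 'v"
  assumes pa: "poisson_algebra sc m b"
begin

lemma linR_m: "Vector_Spaces.linear sc sc (m x)"
  using pa unfolding poisson_algebra_def bilinear_op_def by blast
lemma linL_m: "Vector_Spaces.linear sc sc (\<lambda>y. m y x)"
  using pa unfolding poisson_algebra_def bilinear_op_def by blast
lemma linR_b: "Vector_Spaces.linear sc sc (b x)"
  using pa unfolding poisson_algebra_def bilinear_op_def by blast
lemma linL_b: "Vector_Spaces.linear sc sc (\<lambda>y. b y x)"
  using pa unfolding poisson_algebra_def bilinear_op_def by blast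

lemma m_comm: "m x y = m y x" using pa unfolding poisson_algebra_def by blast
lemma m_assoc: "m (m x y) z = m x (m y z)" using pa unfolding poisson_algebra_def by blast
lemma b_self[simp]: "b x x = 0" using pa unfolding poisson_algebra_def by blast
lemma leib: "b (m x y) z = m (b x z) y + m x (b y z)" using pa unfolding poisson_algebra_def by blast

lemma m_addR: "m x (y + z) = m x y + m x z" using linR_m[of x] unfolding Vector_Spaces.linear_iff by blast
lemma m_scR: "m x (sc a y) = sc a (m x y)" using linR_m[of x] unfolding Vector_Spaces.linear_iff by blast
lemma m_addL: "m (y + z) x = m y x + m z x" using linL_m[of x] unfolding Vector_Spaces.linear_iff by blast
lemma m_scL: "m (sc a y) x = sc a (m y x)" using linL_m[of x] unfolding Vector_Spaces.linear_iff by blast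
lemma b_addR: "b x (y + z) = b x y + b x z" using linR_b[of x] unfolding Vector_Spaces.linear_iff by blast
lemma b_scR: "b x (sc a y) = sc a (b x y)" using linR_b[of x] unfolding Vector_Spaces.linear_iff by blast
lemma b_addL: "b (y + z) x = b y x + b z x" using linL_b[of x] unfolding Vector_Spaces.linear_iff by blast
lemma b_scL: "b (sc a y) x = sc a (b y x)" using linL_b[of x] unfolding Vector_Spaces.linear_iff by blast

lemma m_0R[simp]: "m x 0 = 0" using m_scR[of x 0 0] by simp
lemma m_0L[simp]: "m 0 x = 0" using m_scL[of 0 0 x] by simp
lemma b_0R[simp]: "b x 0 = 0" using b_scR[of x 0 0] by simp
lemma b_0L[simp]: "b 0 x = 0" using b_scL[of 0 0 x] by simp
lemma m_negR: "m x (- y) = - m x y"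
proof -
  have "m x y + m x (- y) = 0" by (simp add: m_addR[symmetric])
  then show ?thesis by (simp add: add_eq_0_iff)
qed
lemma m_negL: "m (- y) x = - m y x"
proof -
  have "m y x + m (- y) x = 0" by (simp add: m_addL[symmetric])
  then show ?thesis by (simp add: add_eq_0_iff)
qed
lemma b_negR: "b x (- y) = - b x y"
proof -
  have "b x y + b x (- y) = 0" by (simp add: b_addR[symmetric])
  then show ?thesis by (simp add: add_eq_0_iff)
qed
lemma b_negL: "b (- y) x = - b y x"
proof -
  have "b y x + b (- y) x = 0" by (simp add: b_addL[symmetric])
  then show ?thesis by (simp add: add_eq_0_iff)
qed
lemma m_diffR: "m x (y - z) = m x y - m x z" by (simp only: diff_conv_add_uminus m_addR m_negR)
lemma m_diffL: "m (y - z) x = m y x - m z x" by (simp only: diff_conv_add_uminus m_addL m_negL)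
lemma b_diffR: "b x (y - z) = b x y - b x z" by (simp only: diff_conv_add_uminus b_addR b_negR)
lemma b_diffL: "b (y - z) x = b y x - b z x" by (simp only: diff_conv_add_uminus b_addL b_negL)

lemma b_anti: "b x y = - b y x"
proof -
  have "b (x + y) (x + y) = b x x + b y x + (b x y + b y y)" by (simp only: b_addL b_addR)
  then have "b x y + b y x = 0" by (simp add: add.commute)
  then show ?thesis by (simp only: eq_neg_iff_add_eq_0)
qed

lemma m_sumR: "m x (sum f S) = (\<Sum>i\<in>S. m x (f i))"
  by (induct S rule: infinite_finite_induct) (auto simp: m_addR)
lemma m_sumL: "m (sum f S) x = (\<Sum>i\<in>S. m (f i) x)"
  by (induct S rule: infinite_finite_induct) (auto simp: m_addL)
lemma b_sumR: "b x (sum f S) = (\<Sum>i\<in>S. b x (f i))"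
  by (induct S rule: infinite_finite_induct) (auto simp: b_addR)
lemma b_sumL: "b (sum f S) x = (\<Sum>i\<in>S. b (f i) x)"
  by (induct S rule: infinite_finite_induct) (auto simp: b_addL)

lemma subspace_preR: "subspace T \<Longrightarrow> subspace {y. m x y \<in> T}"
  unfolding subspace_def by (auto simp: m_addR m_scR)
lemma subspace_preL: "subspace T \<Longrightarrow> subspace {y. m y x \<in> T}"
  unfolding subspace_def by (auto simp: m_addL m_scL)

abbreviation P where "P k \<equiv> alg_pow sc m k"

lemma P_subspace: "subspace (P k)"
proof (cases k)
  case (Suc j) then show ?thesis by (cases j) auto
qed simp

lemma P_mult: "1 \<le> k \<Longrightarrow> u \<in> P k \<Longrightarrow> m u v \<in> P (Suc k)"
  by (cases k) (auto intro!: span_base)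

lemma P_mono_Suc: "P (Suc k) \<subseteq> P k"
proof (induct k)
  case 0 then show ?case by simp
next
  case (Suc k)
  show ?case
  proof (cases k)
    case 0 then show ?thesis by simp
  next
    case (Suc j)
    have "P (Suc (Suc (Suc j))) \<subseteq> span {m x y | x y. x \<in> P (Suc j)}"
      using Suc.hyps \<open>k = Suc j\<close> by (auto intro!: span_mono)
    then show ?thesis using \<open>k = Suc j\<close> by simp
  qed
qed

lemma P_mono: "i \<le> j \<Longrightarrow> P j \<subseteq> P i"
  by (induct j rule: dec_induct) (use P_mono_Suc in auto)

lemma P_prod: "1 \<le> j \<Longrightarrow> 1 \<le> i \<Longrightarrow> u \<in> P i \<Longrightarrow> v \<in> P j \<Longrightarrow> m u v \<in> P (i + j)"
proof (induct j arbitrary: i u v rule: dec_induct)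
  case base
  then show ?case using P_mult by simp
next
  case (step j)
  obtain j' where j': "j = Suc j'" using step by (cases j) auto
  have v: "v \<in> span {m x y | x y. x \<in> P j}" using step j' by simp
  have "span {m x y | x y. x \<in> P j} \<subseteq> {v. m u v \<in> P (i + Suc j)}"
  proof (rule span_minimal)
    show "subspace {v. m u v \<in> P (i + Suc j)}" by (rule subspace_preR[OF P_subspace])
    show "{m x y | x y. x \<in> P j} \<subseteq> {v. m u v \<in> P (i + Suc j)}"
    proof clarify
      fix x y assume "x \<in> P j"
      then have "m u x \<in> P (i + j)" using step by blast
      then have "m (m u x) y \<in> P (Suc (i + j))" using P_mult step by simp
      then show "m u (m x y) \<in> P (i + Suc j)" by (simp add: m_assoc)
    qed
  qed
  then show ?case using v by blast
qed


lemma pw_Suc: "1 \<le> k \<Longrightarrow> pw m x (Suc k) = m (pw m x k) x"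
  by (cases k) auto

lemma pw_add: assumes "1 \<le> i" "1 \<le> j" shows "pw m x (i + j) = m (pw m x i) (pw m x j)"
  using assms(2)
proof (induct j rule: dec_induct)
  case base then show ?case using pw_Suc[of i] assms by simp
next
  case (step j)
  have "pw m x (i + Suc j) = m (pw m x (i + j)) x" using pw_Suc[of "i + j"] step assms by simp
  also have "\<dots> = m (pw m x i) (m (pw m x j) x)" using step by (simp add: m_assoc)
  also have "\<dots> = m (pw m x i) (pw m x (Suc j))" using pw_Suc[of j] step by simp
  finally show ?case .
qed

lemma pw_1L: "1 \<le> j \<Longrightarrow> pw m x (Suc j) = m x (pw m x j)"
  using pw_Suc[of j x] by (simp add: m_comm)

lemma pw_P: "1 \<le> i \<Longrightarrow> pw m x i \<in> P i"
proof (induct i rule: dec_induct)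
  case base then show ?case by simp
next
  case (step i) then show ?case using pw_Suc[of i x] P_mult[of i] by simp
qed

lemma pw_scale_Suc: "pw m (sc c x) (Suc j) = sc (c ^ Suc j) (pw m x (Suc j))"
  by (induct j) (simp_all add: m_scL m_scR mult_ac)

lemma pw_scale: "pw m (sc c x) i = sc (c ^ i) (pw m x i)"
  by (cases i) (simp_all only: pw_scale_Suc, simp)

lemma pw_mult_y: assumes "m x y = 0" "1 \<le> i" shows "m (pw m x i) y = 0"
  using assms(2)
proof (induct i rule: dec_induct)
  case base then show ?case using assms by simp
next
  case (step i) then show ?case using pw_Suc[of i x] assms by (simp add: m_assoc)
qed


lemma L1: "1 \<le> i \<Longrightarrow> b (pw m x i) x = 0"
proof (induct i rule: dec_induct)
  case base then show ?case by simp
next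
  case (step i) then show ?case using pw_Suc[of i x] by (simp add: leib)
qed

lemma L2: assumes "1 \<le> i" "1 \<le> j" shows "b (pw m x i) (pw m x j) = 0"
  using assms(2)
proof (induct j rule: dec_induct)
  case base then show ?case using L1[OF assms(1)] by simp
next
  case (step j)
  have "b (pw m x i) (pw m x (Suc j)) = - b (m (pw m x j) x) (pw m x i)"
    using pw_Suc[of j x] step by (simp add: b_anti[of "pw m x i"])
  also have "\<dots> = - (m (b (pw m x j) (pw m x i)) x + m (pw m x j) (b x (pw m x i)))"
    by (simp add: leib)
  also have "\<dots> = 0"
    using step L1[OF assms(1), of x] b_anti[of "pw m x j" "pw m x i"] b_anti[of x "pw m x i"] by simp
  finally show ?case .
qed

lemma L3:
  assumes h: "\<And>i. 1 \<le> i \<Longrightarrow> m (pw m x i) (b x y) = 0" and i: "2 \<le> i"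
  shows "b (pw m x i) y = 0"
  using i
proof (induct i rule: dec_induct)
  case base
  have "b (pw m x 2) y = m (b x y) x + m x (b x y)" by (simp add: numeral_2_eq_2 leib)
  also have "\<dots> = 0" using h[of 1] by (simp add: m_comm[of "b x y"])
  finally show ?case .
next
  case (step i)
  have "b (pw m x (Suc i)) y = m (b (pw m x i) y) x + m (pw m x i) (b x y)"
    using pw_Suc[of i x] step by (simp add: leib)
  then show ?case using step h[of i] by simp
qed

end

locale PF = PA sc m b + finite_dimensional_vector_space sc Bas
  for sc :: "complex \<Rightarrow> 'v::ab_group_add \<Rightarrow> 'v" and m b and Bas :: "'v set" +
  fixes n :: nat
  assumes cardB: "card Bas = n" and fil: "filiform sc m n" and n3: "3 < n"
begin

lemma dimU: "dim (UNIV :: 'v set) = n" using cardB by simp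

lemma dimP: "2 \<le> i \<Longrightarrow> i \<le> n \<Longrightarrow> dim (P i) = n - i"
  using fil unfolding filiform_def by auto

lemma Pn: "P n = {0}"
proof -
  have "dim (P n) = 0" using dimP[of n] n3 by simp
  then have "P n \<subseteq> {0}" by simp
  moreover have "0 \<in> P n" using P_subspace subspace_0 by blast
  ultimately show ?thesis by blast
qed

lemma pw_zero: "n \<le> i \<Longrightarrow> pw m x i = 0"
  using pw_P[of i x] P_mono[of n i] Pn n3 by auto

lemma K1:
  assumes "2 \<le> k" "k \<le> n - 1" "w \<in> P k" "w \<notin> P (Suc k)"
  shows "P k \<subseteq> span (insert w (P (Suc k)))"
proof -
  have sub: "insert w (P (Suc k)) \<subseteq> P k" using assms P_mono_Suc by blast
  have "w \<notin> span (P (Suc k))" using assms(4) span_eq_iff[of "P (Suc k)"] P_subspace[of "Suc k"] by blast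
  then have "dim (insert w (P (Suc k))) = dim (P (Suc k)) + 1" by (simp add: dim_insert)
  also have "\<dots> = dim (P k)" using dimP[of k] dimP[of "Suc k"] assms n3 by simp
  finally have "span (insert w (P (Suc k))) = span (P k)" using sub by (intro dim_eq_span) auto
  then show ?thesis using P_subspace by (simp add: span_superset)
qed

lemma exists_sq:
  "\<exists>x. m x x \<notin> P 3"
proof (rule ccontr)
  assume "\<not> ?thesis"
  then have sq: "m x x \<in> P 3" for x by blast
  have gen: "m u v \<in> P 3" for u v
  proof -
    have e1: "m (u + v) (u + v) = m u u + m v u + (m u v + m v v)" by (simp only: m_addL m_addR)
    have e2: "m v u = m u v" by (rule m_comm)
    have "m u v + m u v = m (u + v) (u + v) - m u u - m v v" unfolding e1 e2 by (simp add: algebra_simps)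
    moreover have "m (u + v) (u + v) - m u u - m v v \<in> P 3" using sq P_subspace by (simp add: subspace_diff)
    ultimately have "m u v + m u v \<in> P 3" by simp
    moreover have "m u v + m u v = sc 2 (m u v)"
      using scale_left_distrib[of 1 1 "m u v"] by (simp add: one_add_one)
    ultimately have "sc 2 (m u v) \<in> P 3" by simp
    then have "sc (1/2) (sc 2 (m u v)) \<in> P 3" using P_subspace subspace_scale by blast
    then show ?thesis by simp
  qed
  have "P 2 \<subseteq> P 3"
  proof -
    have "P 2 = span {m x y | x y. x \<in> P 1}" by (simp add: numeral_2_eq_2)
    also have "\<dots> \<subseteq> P 3" using gen P_subspace by (intro span_minimal) auto
    finally show ?thesis .
  qed
  then have "P 2 = P 3" using P_mono_Suc[of 2] by (simp add: numeral_3_eq_3)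
  then show False using dimP[of 2] dimP[of 3] n3 by simp
qed


lemma span_insert_span: "span (insert a (span S)) = span (insert a S)"
proof
  show "span (insert a (span S)) \<subseteq> span (insert a S)"
    by (rule span_minimal) (auto intro: span_base span_mono[of S "insert a S", THEN subsetD])
  show "span (insert a S) \<subseteq> span (insert a (span S))"
    by (rule span_mono) (auto intro: span_base)
qed

lemma P_Suc_eq: "2 \<le> k \<Longrightarrow> P (Suc k) = span {m a c | a c. a \<in> P k}"
  by (cases k) auto

lemma indep_pw:
  assumes x: "pw m x (n - 1) \<noteq> 0"
  shows "d \<le> n - 1 \<Longrightarrow> independent (pw m x ` {n - d..n - 1}) \<and> card (pw m x ` {n - d..n - 1}) = d"
proof (induct d)
  case 0 then show ?case using n3 by (simp add: independent_empty)
next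
  case (Suc d)
  define k where "k = n - Suc d"
  have k: "1 \<le> k" "k \<le> n - 1" "Suc k = n - d" using Suc n3 unfolding k_def by auto
  define S where "S = pw m x ` {Suc k..n - 1}"
  have IH: "independent S" "card S = d" using Suc k unfolding S_def by auto
  have nin: "pw m x k \<notin> span S"
  proof (cases d)
    case 0
    then have "S = {}" "k = n - 1" using k unfolding S_def by auto
    then show ?thesis using x by simp
  next
    case (Suc d')
    then have kn: "k \<le> n - 2" using k by simp
    define q where "q = pw m x (n - 1 - k)"
    have "span S \<subseteq> {v. m v q \<in> {0}}"
    proof (rule span_minimal)
      show "subspace {v. m v q \<in> {0}}" by (rule subspace_preL) simp
      show "S \<subseteq> {v. m v q \<in> {0}}"
      proof
        fix v assume "v \<in> S"
        then obtain i where i: "i \<in> {Suc k..n - 1}" "v = pw m x i" unfolding S_def by blast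
        then have "m v q = pw m x (i + (n - 1 - k))" unfolding q_def using pw_add[of i "n - 1 - k" x] kn k by simp
        also have "\<dots> = 0" using i k by (intro pw_zero) auto
        finally show "v \<in> {v. m v q \<in> {0}}" by simp
      qed
    qed
    moreover have "m (pw m x k) q = pw m x (n - 1)"
    proof -
      have "n - 1 - k = d" "k + d = n - 1" using k by auto
      then show ?thesis unfolding q_def using pw_add[of k d x] k \<open>d = Suc d'\<close> by simp
    qed
    ultimately show ?thesis using x by auto
  qed
  have iv: "pw m x ` {k..n - 1} = insert (pw m x k) S" unfolding S_def using k by (auto simp: atLeastAtMost_iff) (metis Suc_leI atLeastAtMost_iff image_eqI le_neq_implies_less)
  have "pw m x k \<notin> S" using nin span_base by blast
  moreover have "finite S" unfolding S_def by simp
  ultimately have "card (insert (pw m x k) S) = Suc d" using IH by simp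
  moreover have "independent (insert (pw m x k) S)" using nin IH(1) by (rule independent_insertI)
  ultimately show ?case using iv k_def by simp
qed

lemma basis0:
  assumes x: "pw m x (n - 1) \<noteq> 0" and y: "y \<notin> span (pw m x ` {1..n - 1})"
  shows "independent (insert y (pw m x ` {1..n - 1}))"
    and "span (insert y (pw m x ` {1..n - 1})) = UNIV"
    and "inj_on (pw m x) {1..n - 1}"
    and "y \<notin> pw m x ` {1..n - 1}"
proof -
  have h: "independent (pw m x ` {1..n - 1})" "card (pw m x ` {1..n - 1}) = n - 1"
    using indep_pw[OF x, of "n - 1"] n3 by auto
  show ind: "independent (insert y (pw m x ` {1..n - 1}))" using y h by (intro independent_insertI)
  show yn: "y \<notin> pw m x ` {1..n - 1}" using y span_base by blast
  show "inj_on (pw m x) {1..n - 1}" using h(2) by (simp add: eq_card_imp_inj_on)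
  have "card (insert y (pw m x ` {1..n - 1})) = n" using h yn n3 by simp
  then have "UNIV \<subseteq> span (insert y (pw m x ` {1..n - 1}))"
    using card_eq_dim[of "insert y (pw m x ` {1..n - 1})" UNIV] ind dimU by simp
  then show "span (insert y (pw m x ` {1..n - 1})) = UNIV" by blast
qed

lemma iso_exists:
  assumes k: "k \<in> {1..5}" and x: "pw m x (n - 1) \<noteq> 0" and y: "y \<notin> span (pw m x ` {1..n - 1})"
    and xy: "m x y = 0"
    and yy: "m y y = (if k \<in> {4, 5} then pw m x (n - 1) else 0)"
    and bxy: "b x y = (if k = 2 then y else if k \<in> {3, 5} then pw m x (n - 1) else 0)"
  shows "\<exists>f. iso_to_model sc m b n k f"
proof -
  define u where "u i = (if i = n then y else pw m x i)" for i
  have iv: "{1..n} = insert n {1..n - 1}" using n3 by auto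
  have U: "u ` {1..n} = insert y (pw m x ` {1..n - 1})"
    unfolding iv u_def by auto
  have inj: "inj_on u {1..n}"
  proof -
    have "inj_on u {1..n - 1}" using basis0(3)[OF x y] unfolding u_def inj_on_def by auto
    moreover have "u n \<notin> u ` ({1..n - 1} - {n})" using basis0(4)[OF x y] unfolding u_def by auto
    ultimately show ?thesis unfolding iv by simp
  qed
  have ind: "independent (u ` {1..n})" using basis0(1)[OF x y] U by simp
  have spanU: "span (u ` {1..n}) = UNIV" using basis0(2)[OF x y] U by simp
  define g where "g c = (\<Sum>i\<in>{1..n}. sc (c i) (u i))" for c :: "nat \<Rightarrow> complex"
  have g_add: "g (c + d) = g c + g d" for c d by (simp add: g_def scale_left_distrib sum.distrib)
  have g_sc: "g (cscale a c) = sc a (g c)" for a c by (simp add: g_def cscale_def scale_sum_right)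
  have g_0: "g 0 = 0" by (simp add: g_def)
  have g_neg: "g (- c) = - g c" for c by (simp add: g_def sum_negf)
  have g_diff: "g (c - d) = g c - g d" for c d by (simp add: g_def scale_left_diff_distrib sum_subtractf)
  have g_sum: "g (\<Sum>i\<in>A. F i) = (\<Sum>i\<in>A. g (F i))" for A and F :: "'a \<Rightarrow> nat \<Rightarrow> complex"
    unfolding g_def fun_sum_apply scale_sum_left by (rule sum.swap)
  have g_ebas: "g (ebas l) = u l" if "l \<in> {1..n}" for l
  proof -
    have "g (ebas l) = (\<Sum>i\<in>{1..n}. if i = l then u i else 0)"
      unfolding g_def ebas_def by (rule sum.cong) auto
    also have "\<dots> = u l" using that by simp
    finally show ?thesis .
  qed
  define ui where "ui = the_inv_into {1..n} u"
  have ui: "ui (u i) = i" if "i \<in> {1..n}" for i unfolding ui_def using inj that by (rule the_inv_into_f_f)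
  have g_reindex: "(\<Sum>v\<in>u ` {1..n}. sc (h v) v) = (\<Sum>i\<in>{1..n}. sc (h (u i)) (u i))" for h
    using sum.reindex[OF inj, of "\<lambda>v. sc (h v) v"] by simp
  have g_inj: "c = d" if c: "c \<in> coord_space n" and d: "d \<in> coord_space n" and eq: "g c = g d" for c d
  proof
    fix l
    define e where "e = c - d"
    have ge: "g e = 0" unfolding e_def g_diff eq by simp
    have "(\<Sum>v\<in>u ` {1..n}. sc (e (ui v)) v) = 0"
    proof -
      have "(\<Sum>i\<in>{1..n}. sc (e (ui (u i))) (u i)) = (\<Sum>i\<in>{1..n}. sc (e i) (u i))"
        by (rule sum.cong) (auto simp: ui)
      then show ?thesis unfolding g_reindex using ge unfolding g_def by simp
    qed
    then have e0: "e (ui v) = 0" if "v \<in> u ` {1..n}" for v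
      using independentD[OF ind, of "u ` {1..n}" "\<lambda>v. e (ui v)" v] that by simp
    show "c l = d l"
    proof (cases "l \<in> {1..n}")
      case True then show ?thesis using e0[of "u l"] ui[of l] unfolding e_def by simp
    next
      case False then show ?thesis using c d unfolding coord_space_def by simp
    qed
  qed
  have g_surj: "\<exists>c\<in>coord_space n. g c = v" for v
  proof -
    have "v \<in> span (u ` {1..n})" using spanU by simp
    then obtain w where w: "v = (\<Sum>v'\<in>u ` {1..n}. sc (w v') v')"
      using span_finite[of "u ` {1..n}"] by auto
    define c where "c i = (if i \<in> {1..n} then w (u i) else 0)" for i
    have "c \<in> coord_space n" unfolding c_def coord_space_def by simp
    moreover have "g c = v" unfolding w g_reindex g_def c_def by (rule sum.cong) auto
    ultimately show ?thesis by blast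
  qed
  have ex1: "\<exists>!c. c \<in> coord_space n \<and> g c = v" for v
    using g_surj[of v] g_inj by blast
  define f where "f v = (THE c. c \<in> coord_space n \<and> g c = v)" for v
  have f: "f v \<in> coord_space n" "g (f v) = v" for v
    using theI'[OF ex1[of v]] unfolding f_def by auto
  have fg: "f (g c) = c" if "c \<in> coord_space n" for c
    using g_inj[OF f(1) that] f(2) by simp
  have hyp3: "m (pw m x i) (b x y) = 0" if "1 \<le> i" for i
  proof -
    have "m (pw m x i) (pw m x (n - 1)) = 0"
      using pw_add[of i "n - 1" x] that n3 pw_zero[of "i + (n - 1)" x] by simp
    then show ?thesis using bxy pw_mult_y[OF xy that] by auto
  qed
  have tm: "m (u i) (u j) = g (mult_tab n k i j)" if i: "i \<in> {1..n}" and j: "j \<in> {1..n}" for i j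
  proof -
    have "m (u i) (u j) = (if 2 \<le> i + j \<and> i + j \<le> n - 1 then u (i + j) else 0)
        + (if k \<in> {4, 5} \<and> i = n \<and> j = n then u (n - 1) else 0)"
    proof (cases "i = n")
      case True
      show ?thesis
      proof (cases "j = n")
        case True
        have "\<not> n + n \<le> n - 1" "n - 1 \<noteq> n" using n3 by auto
        then show ?thesis using \<open>i = n\<close> True yy unfolding u_def by simp
      next
        case False
        then show ?thesis using \<open>i = n\<close> j pw_mult_y[OF xy, of j] m_comm[of y] unfolding u_def by auto
      qed
    next
      case False
      show ?thesis
      proof (cases "j = n")
        case True
        then show ?thesis using \<open>i \<noteq> n\<close> i pw_mult_y[OF xy, of i] unfolding u_def by auto
      next
        case False
        have "m (pw m x i) (pw m x j) = pw m x (i + j)" using pw_add[of i j x] i j by simp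
        moreover have "pw m x (i + j) = 0" if "\<not> i + j \<le> n - 1" using that by (intro pw_zero) auto
        ultimately show ?thesis using \<open>i \<noteq> n\<close> False i j unfolding u_def by auto
      qed
    qed
    also have "\<dots> = g (mult_tab n k i j)"
      unfolding mult_tab_def g_add using i j n3 by (auto simp: g_ebas g_0)
    finally show ?thesis .
  qed
  have tb: "b (u i) (u j) = g (brack_tab n k i j)" if i: "i \<in> {1..n}" and j: "j \<in> {1..n}" for i j
  proof -
    have "b (u i) (u j) = (if k = 2 then
        (if i = 1 \<and> j = n then u n else if i = n \<and> j = 1 then - u n else 0)
      else if k \<in> {3, 5} then
        (if i = 1 \<and> j = n then u (n - 1) else if i = n \<and> j = 1 then - u (n - 1) else 0)
      else 0)"
    proof (cases "i = n")
      case True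
      show ?thesis
      proof (cases "j = n")
        case True
        then show ?thesis using \<open>i = n\<close> n3 by simp
      next
        case False
        show ?thesis
        proof (cases "j = 1")
          case True
          have "b y x = - b x y" by (rule b_anti)
          then show ?thesis using \<open>i = n\<close> True bxy n3 unfolding u_def by auto
        next
          case False
          have "b (pw m x j) y = 0" using L3[of x y j] hyp3 j False by auto
          then show ?thesis using \<open>i = n\<close> \<open>j \<noteq> n\<close> False b_anti[of y "pw m x j"] n3 unfolding u_def by auto
        qed
      qed
    next
      case False
      show ?thesis
      proof (cases "j = n")
        case True
        show ?thesis
        proof (cases "i = 1")
          case True
          then show ?thesis using \<open>j = n\<close> bxy n3 unfolding u_def by auto
        next
          case False
          have "b (pw m x i) y = 0" using L3[of x y i] hyp3 i False by auto
          then show ?thesis using \<open>j = n\<close> \<open>i \<noteq> n\<close> False n3 unfolding u_def by auto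
        qed
      next
        case False
        then show ?thesis using \<open>i \<noteq> n\<close> i j L2[of i j x] unfolding u_def by auto
      qed
    qed
    also have "\<dots> = g (brack_tab n k i j)"
      unfolding brack_tab_def using i j n3 by (auto simp: g_ebas g_0 g_neg)
    finally show ?thesis .
  qed
  have expand: "F (g c) (g d) = (\<Sum>i\<in>{1..n}. \<Sum>j\<in>{1..n}. sc (c i * d j) (F (u i) (u j)))"
    if sumL: "\<And>(G :: nat \<Rightarrow> 'v) S z. F (sum G S) z = (\<Sum>i\<in>S. F (G i) z)"
      and sumR: "\<And>(G :: nat \<Rightarrow> 'v) S z. F z (sum G S) = (\<Sum>i\<in>S. F z (G i))"
      and scL: "\<And>a w z. F (sc a w) z = sc a (F w z)"
      and scR: "\<And>a w z. F z (sc a w) = sc a (F z w)"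
    for F :: "'v \<Rightarrow> 'v \<Rightarrow> 'v" and c d
  proof -
    have h1: "F (\<Sum>i\<in>{1..n}. sc (c i) (u i)) z = (\<Sum>i\<in>{1..n}. sc (c i) (F (u i) z))" for z
      by (simp add: sumL scL)
    have h2: "F w (\<Sum>j\<in>{1..n}. sc (d j) (u j)) = (\<Sum>j\<in>{1..n}. sc (d j) (F w (u j)))" for w
      by (simp add: sumR scR)
    show ?thesis unfolding g_def h1 unfolding h2 by (simp add: scale_sum_right)
  qed
  have gext: "g (extend_tab n T c d) = (\<Sum>i\<in>{1..n}. \<Sum>j\<in>{1..n}. sc (c i * d j) (g (T i j)))" for T c d
    unfolding extend_tab_def g_sum g_sc ..
  have hom: "f (F v w) = extend_tab n T (f v) (f w)"
    if FT: "\<And>i j. i \<in> {1..n} \<Longrightarrow> j \<in> {1..n} \<Longrightarrow> F (u i) (u j) = g (T i j)"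
      and TC: "\<And>i j. i \<in> {1..n} \<Longrightarrow> j \<in> {1..n} \<Longrightarrow> T i j \<in> coord_space n"
      and ex: "\<And>c d. F (g c) (g d) = (\<Sum>i\<in>{1..n}. \<Sum>j\<in>{1..n}. sc (c i * d j) (F (u i) (u j)))"
    for F T v w
  proof -
    have "F v w = F (g (f v)) (g (f w))" using f by simp
    also have "\<dots> = g (extend_tab n T (f v) (f w))"
      unfolding ex gext by (intro sum.cong refl) (simp add: FT)
    finally show ?thesis using fg[OF coord_extend[OF TC]] by simp
  qed
  have hm: "f (m v w) = model_mult n k (f v) (f w)" for v w
    unfolding model_mult_def
    by (rule hom[OF tm coord_mult_tab expand[OF m_sumL m_sumR m_scL m_scR]]) (auto simp: n3)
  have hb: "f (b v w) = model_brack n k (f v) (f w)" for v w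
    unfolding model_brack_def
    by (rule hom[OF tb coord_brack_tab expand[OF b_sumL b_sumR b_scL b_scR]]) (auto simp: n3)
  have lin: "Vector_Spaces.linear sc cscale f"
    unfolding Vector_Spaces.linear_iff
  proof (intro conjI allI)
    show "vector_space sc" by unfold_locales
    show "vector_space cscale" by (rule vs_cscale)
    fix v w :: 'v and a
    have "f v + f w \<in> coord_space n" using f by (simp add: coord_add)
    then show "f (v + w) = f v + f w" using fg[of "f v + f w"] f g_add by metis
    have "cscale a (f v) \<in> coord_space n" using f by (simp add: coord_sc)
    then show "f (sc a v) = cscale a (f v)" using fg[of "cscale a (f v)"] f g_sc by metis
  qed
  have bij: "bij_betw f UNIV (coord_space n)"
    unfolding bij_betw_def
  proof
    show "inj_on f UNIV" by (metis f(2) inj_onI)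
    show "range f = coord_space n" using f fg by (metis image_eqI subsetI subset_antisym image_subsetI UNIV_I)
  qed
  show ?thesis unfolding iso_to_model_def using lin bij hm hb by blast
qed

lemma apply_iso:
  assumes x: "pw m x (n - 1) \<noteq> 0" and y: "y \<notin> span (pw m x ` {1..n - 1})" and xy: "m x y = 0"
    and yy: "m y y = sc \<beta> (pw m x (n - 1))" and bxy: "b x y = sc a y + sc c (pw m x (n - 1))"
    and l: "l \<noteq> 0" and mu: "\<mu> \<noteq> 0" and k: "k \<in> {1..5}"
    and e1: "\<mu>^2 * \<beta> = (if k \<in> {4, 5} then l ^ (n - 1) else 0)"
    and e2: "l * a = (if k = 2 then 1 else 0)"
    and e3: "l * \<mu> * c - l * a * \<nu> = (if k \<in> {3, 5} then l ^ (n - 1) else 0)"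
  shows "\<exists>f. iso_to_model sc m b n k f"
proof -
  define p where "p = pw m x (n - 1)"
  define x' where "x' = sc l x"
  define y' where "y' = sc \<mu> y + sc \<nu> p"
  have px': "pw m x' i = sc (l ^ i) (pw m x i)" for i by (simp add: x'_def pw_scale)
  have p': "pw m x' (n - 1) = sc (l ^ (n - 1)) p" using px' p_def by simp
  have xp: "m x p = 0" using pw_1L[of "n - 1" x] pw_zero[of n x] n3 unfolding p_def by simp
  have py: "m p y = 0" using pw_mult_y[OF xy, of "n - 1"] n3 unfolding p_def by simp
  have pp: "m p p = 0" using pw_add[of "n - 1" "n - 1" x] pw_zero[of "n - 1 + (n - 1)" x] n3 unfolding p_def by simp
  have bxp: "b x p = 0" using L1[of "n - 1" x] b_anti[of x p] n3 unfolding p_def by simp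
  have x1: "pw m x' (n - 1) \<noteq> 0" using p' l x unfolding p_def by simp
  have sub: "span (pw m x' ` {1..n - 1}) \<subseteq> span (pw m x ` {1..n - 1})"
  proof (rule span_minimal)
    show "pw m x' ` {1..n - 1} \<subseteq> span (pw m x ` {1..n - 1})"
    proof
      fix v assume "v \<in> pw m x' ` {1..n - 1}"
      then obtain i where i: "i \<in> {1..n - 1}" "v = pw m x' i" by blast
      have "pw m x i \<in> span (pw m x ` {1..n - 1})" using i by (intro span_base) auto
      then show "v \<in> span (pw m x ` {1..n - 1})" using i px' by (simp add: span_scale)
    qed
  qed simp
  have p_in: "p \<in> span (pw m x ` {1..n - 1})" unfolding p_def using n3 by (intro span_base) auto
  have y1: "y' \<notin> span (pw m x' ` {1..n - 1})"
  proof
    assume "y' \<in> span (pw m x' ` {1..n - 1})"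
    then have "y' \<in> span (pw m x ` {1..n - 1})" using sub by blast
    then have "y' - sc \<nu> p \<in> span (pw m x ` {1..n - 1})" using p_in by (intro span_diff span_scale)
    then have "sc (1 / \<mu>) (y' - sc \<nu> p) \<in> span (pw m x ` {1..n - 1})" by (rule span_scale)
    moreover have "sc (1 / \<mu>) (y' - sc \<nu> p) = y" unfolding y'_def using mu by simp
    ultimately show False using y by simp
  qed
  have xy1: "m x' y' = 0" unfolding x'_def y'_def by (simp add: m_scL m_addR m_scR xy xp)
  have "m y' y' = sc (\<mu>^2 * \<beta>) p"
  proof -
    have yy': "m y y = sc \<beta> p" using yy unfolding p_def .
    show ?thesis
      unfolding y'_def by (simp add: m_addL m_addR m_scL m_scR yy' py pp m_comm[of y p] power2_eq_square mult.assoc)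
  qed
  also have "\<dots> = (if k \<in> {4, 5} then pw m x' (n - 1) else 0)" using e1 p' by simp
  finally have yy1: "m y' y' = (if k \<in> {4, 5} then pw m x' (n - 1) else 0)" .
  have "b x' y' = sc (l * \<mu>) (sc a y + sc c p)"
  proof -
    have bxy': "b x y = sc a y + sc c p" using bxy unfolding p_def .
    show ?thesis unfolding x'_def y'_def by (simp add: b_scL b_addR b_scR bxy' bxp)
  qed
  also have "\<dots> = sc (l * a) y' + sc (l * \<mu> * c - l * a * \<nu>) p"
    unfolding y'_def by (simp add: algebra_simps)
  also have "\<dots> = (if k = 2 then y' else if k \<in> {3, 5} then pw m x' (n - 1) else 0)"
    using e2 e3 p' by auto
  finally have bxy1: "b x' y' = (if k = 2 then y' else if k \<in> {3, 5} then pw m x' (n - 1) else 0)" .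
  show ?thesis by (rule iso_exists[OF k x1 y1 xy1 yy1 bxy1])
qed

end

declare alg_pow.simps(3)[simp del]

locale PX = PF +
  fixes x
  assumes sq: "m x x \<notin> P 3"
begin

lemma pw2: "pw m x 2 = m x x" by (simp add: numeral_2_eq_2)

lemma notin_next: assumes "2 \<le> k" shows "k \<le> n - 1 \<Longrightarrow> pw m x k \<notin> P (Suc k)"
  using assms
proof (induct k rule: dec_induct)
  case base then show ?case using sq pw2 by (simp add: numeral_3_eq_3 numeral_2_eq_2)
next
  case (step k)
  have IH: "pw m x k \<notin> P (Suc k)" using step by simp
  have Kk: "P k \<subseteq> span (insert (pw m x k) (P (Suc k)))"
    using K1[of k] step IH pw_P[of k x] by simp
  have K2: "P 2 \<subseteq> span (insert (pw m x 2) (P 3))"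
    using K1[of 2 "pw m x 2"] n3 pw_P[of 2 x] sq pw2 by (simp add: numeral_3_eq_3)
  define T where "T = span (insert (pw m x (Suc k)) (P (Suc (Suc k))))"
  have PT: "P (Suc (Suc k)) \<subseteq> T" unfolding T_def by (meson span_superset subset_insertI subset_trans)
  have pwT: "pw m x (Suc k) \<in> T" unfolding T_def by (simp add: span_base)
  have gens: "m a c \<in> T" if a: "a \<in> P k" for a c
  proof -
    have k1: "pw m x k = m (pw m x (k - 1)) x" using pw_Suc[of "k - 1" x] step by simp
    have "span (insert (pw m x 2) (P 3)) \<subseteq> {d. m (pw m x (k - 1)) d \<in> T}"
    proof (rule span_minimal)
      show "subspace {d. m (pw m x (k - 1)) d \<in> T}" unfolding T_def by (rule subspace_preR) simp
      have "m (pw m x (k - 1)) (pw m x 2) = pw m x (Suc k)"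
        using pw_add[of "k - 1" 2 x] step by simp
      moreover have "m (pw m x (k - 1)) p \<in> T" if "p \<in> P 3" for p
        using P_prod[of 3 "k - 1" "pw m x (k - 1)" p] pw_P[of "k - 1" x] that step PT
        by (auto simp: numeral_3_eq_3)
      ultimately show "insert (pw m x 2) (P 3) \<subseteq> {d. m (pw m x (k - 1)) d \<in> T}"
        using pwT by auto
    qed
    moreover have "m x c \<in> P 2" using P_mult[of 1 x c] by (simp add: numeral_2_eq_2)
    ultimately have c1: "m (pw m x k) c \<in> T" using K2 k1 by (auto simp: m_assoc)
    have "span (insert (pw m x k) (P (Suc k))) \<subseteq> {a. m a c \<in> T}"
    proof (rule span_minimal)
      show "subspace {a. m a c \<in> T}" unfolding T_def by (rule subspace_preL) simp
      show "insert (pw m x k) (P (Suc k)) \<subseteq> {a. m a c \<in> T}"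
        using c1 P_mult[of "Suc k" _ c] PT by auto
    qed
    then show ?thesis using a Kk by blast
  qed
  have PsT: "P (Suc k) \<subseteq> T"
    unfolding P_Suc_eq[OF step(1)] T_def by (rule span_minimal) (use gens[unfolded T_def] in auto)
  show ?case
  proof
    assume "pw m x (Suc k) \<in> P (Suc (Suc k))"
    then have "T = span (P (Suc (Suc k)))" unfolding T_def by (simp add: span_redundant span_base)
    also have "\<dots> = P (Suc (Suc k))" using P_subspace span_eq_iff by blast
    finally have "P (Suc k) \<subseteq> P (Suc (Suc k))" using PsT by simp
    then have "dim (P (Suc k)) \<le> dim (P (Suc (Suc k)))" by (rule dim_subset)
    then show False using dimP[of "Suc k"] dimP[of "Suc (Suc k)"] step by simp
  qed
qed

lemma Kx: "2 \<le> k \<Longrightarrow> k \<le> n - 1 \<Longrightarrow> P k \<subseteq> span (insert (pw m x k) (P (Suc k)))"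
  using K1 notin_next pw_P by simp

lemma pw_ne0: "pw m x (n - 1) \<noteq> 0"
  using notin_next[of "n - 1"] n3 Pn subspace_0[OF P_subspace] by (auto simp: Suc_diff_1)

lemma P_span_pw: "d \<le> n - 2 \<Longrightarrow> P (n - d) = span (pw m x ` {n - d..n - 1})"
proof (induct d)
  case 0 then show ?case using Pn n3 by simp
next
  case (Suc d)
  define k where "k = n - Suc d"
  have k: "2 \<le> k" "k \<le> n - 1" "Suc k = n - d" using Suc n3 unfolding k_def by auto
  have IH: "P (Suc k) = span (pw m x ` {Suc k..n - 1})" using Suc k by simp
  have iv: "{k..n - 1} = insert k {Suc k..n - 1}" using k by auto
  have "P k \<subseteq> span (pw m x ` {k..n - 1})"
    using Kx[OF k(1,2)] unfolding IH span_insert_span iv by simp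
  moreover have "pw m x ` {k..n - 1} \<subseteq> P k"
  proof
    fix v assume "v \<in> pw m x ` {k..n - 1}"
    then obtain i where i: "i \<in> {k..n - 1}" "v = pw m x i" by blast
    then show "v \<in> P k" using pw_P[of i x] P_mono[of k i] k by auto
  qed
  then have "span (pw m x ` {k..n - 1}) \<subseteq> P k" by (intro span_minimal P_subspace)
  ultimately show ?case unfolding k_def by blast
qed

lemma P2_span: "P 2 = span (pw m x ` {2..n - 1})"
  using P_span_pw[of "n - 2"] n3 by simp

lemma Pn1_span: "P (n - 1) = span {pw m x (n - 1)}"
  using P_span_pw[of 1] n3 by simp

lemma kstep:
  assumes "1 \<le> j" "j \<le> n - 2" "v \<in> span (insert (pw m x j) (P (Suc j)))" "m x v \<in> P (Suc (Suc j))"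
  shows "v \<in> P (Suc j)"
proof -
  obtain c where c: "v - sc c (pw m x j) \<in> span (P (Suc j))" using assms(3) span_breakdown_eq by blast
  define p where "p = v - sc c (pw m x j)"
  have p: "p \<in> P (Suc j)" using c P_subspace span_eq_iff unfolding p_def by blast
  have v: "v = sc c (pw m x j) + p" unfolding p_def by simp
  have "m x p \<in> P (Suc (Suc j))" using P_prod[of "Suc j" 1 x p] p by simp
  moreover have "m x v = sc c (pw m x (Suc j)) + m x p"
    by (simp add: v m_addR m_scR pw_1L[OF assms(1)])
  ultimately have "sc c (pw m x (Suc j)) \<in> P (Suc (Suc j))"
    using assms(4) subspace_diff[OF P_subspace[of "Suc (Suc j)"], of "m x v" "m x p"] by simp
  then have "c = 0"
  proof (rule contrapos_pp)
    assume "c \<noteq> 0"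
    then have "pw m x (Suc j) = sc (1 / c) (sc c (pw m x (Suc j)))" by simp
    moreover have "pw m x (Suc j) \<notin> P (Suc (Suc j))" using notin_next[of "Suc j"] assms by simp
    ultimately show "sc c (pw m x (Suc j)) \<notin> P (Suc (Suc j))"
      using P_subspace subspace_scale by metis
  qed
  then show ?thesis using v p by simp
qed

lemma kernel:
  assumes "v \<in> span (insert x (P 2))" "m x v = 0"
  shows "v \<in> P (n - 1)"
proof -
  have "v \<in> P j" if "2 \<le> j" "j \<le> n - 1" for j
    using that
  proof (induct j rule: dec_induct)
    case base
    show ?case using kstep[of 1 v] assms n3 subspace_0[OF P_subspace] by (simp add: numeral_2_eq_2)
  next
    case (step j)
    have "v \<in> span (insert (pw m x j) (P (Suc j)))" using Kx[of j] step by auto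
    then show ?case using kstep[of j v] step assms subspace_0[OF P_subspace] by simp
  qed
  then show ?thesis using n3 by simp
qed

lemma in_Pn1: "v \<in> P (n - 1) \<Longrightarrow> \<exists>c. v = sc c (pw m x (n - 1))"
  using Pn1_span span_singleton by auto


lemma root_exists: "q \<noteq> 0 \<Longrightarrow> 0 < t \<Longrightarrow> \<exists>l::complex. l \<noteq> 0 \<and> l ^ t = q"
proof -
  assume q: "q \<noteq> 0" and t: "0 < t"
  define l where "l = rcis (root t (cmod q)) (Arg q / real t)"
  have "l ^ t = rcis (root t (cmod q) ^ t) (real t * (Arg q / real t))" unfolding l_def by (rule DeMoivre2)
  also have "\<dots> = rcis (cmod q) (Arg q)" using t by simp
  also have "\<dots> = q" by (rule rcis_cmod_Arg)
  finally have "l ^ t = q" .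
  moreover have "l \<noteq> 0" using q t unfolding l_def by simp
  ultimately show ?thesis by blast
qed

lemma main: "\<exists>k\<in>{1..5}. \<exists>f. iso_to_model sc m b n k f"
proof -
  have xn: "pw m x (n - 1) \<noteq> 0" by (rule pw_ne0)
  define S where "S = pw m x ` {1..n - 1}"
  have "dim (span S) \<le> n - 1"
  proof -
    have "dim (span S) \<le> card S" unfolding S_def by (intro dim_le_card) auto
    also have "\<dots> \<le> card {1..n - 1}" unfolding S_def by (rule card_image_le) simp
    finally show ?thesis by simp
  qed
  then have "span S \<noteq> UNIV"
  proof (intro notI)
    assume d: "dim (span S) \<le> n - 1" and "span S = UNIV"
    then have "dim (span S) = n" using dimU by simp
    then show False using d n3 by simp
  qed
  then obtain y0 where y0: "y0 \<notin> span S" by blast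
  have mh: "module_hom sc sc (m x)" using linR_m[of x] by (simp add: Vector_Spaces.linear_iff_module_hom)
  have img: "pw m x ` {2..n - 1} = m x ` (pw m x ` {1..n - 2})"
  proof -
    have eq: "{2..n - 1} = Suc ` {1..n - 2}" using n3 by (auto simp: image_iff intro!: bexI[of _ "_ - 1"])
    show ?thesis unfolding eq image_image by (intro image_cong refl) (simp add: pw_1L)
  qed
  have "m x y0 \<in> P 2" using P_mult[of 1 x y0] by (simp add: numeral_2_eq_2)
  then have "m x y0 \<in> m x ` span (pw m x ` {1..n - 2})"
    using P2_span img module_hom.span_image[OF mh] by simp
  then obtain w where w1: "w \<in> span (pw m x ` {1..n - 2})" and w2: "m x y0 = m x w" by (rule imageE)
  note w = w1 w2[symmetric]
  define y where "y = y0 - w"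
  have xy: "m x y = 0" unfolding y_def by (simp add: m_diffR w)
  have "pw m x ` {1..n - 2} \<subseteq> S" unfolding S_def by (intro image_mono) auto
  then have wS: "w \<in> span S" using w(1) span_mono by blast
  have y: "y \<notin> span S"
  proof
    assume "y \<in> span S"
    then have "y + w \<in> span S" using wS by (rule span_add)
    then show False using y0 unfolding y_def by simp
  qed
  have "m y y \<in> P 2" using P_mult[of 1 y y] by (simp add: numeral_2_eq_2)
  then have "m y y \<in> span (insert x (P 2))" by (meson span_superset subset_insertI subsetD)
  moreover have "m x (m y y) = 0" by (simp add: m_assoc[symmetric] xy)
  ultimately obtain \<beta> where yy: "m y y = sc \<beta> (pw m x (n - 1))" using kernel in_Pn1 by blast
  have SP: "span S \<subseteq> span (insert x (P 2))"
  proof (rule span_mono)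
    show "S \<subseteq> insert x (P 2)"
    proof
      fix v assume "v \<in> S"
      then obtain i where i: "i \<in> {1..n - 1}" "v = pw m x i" unfolding S_def by blast
      show "v \<in> insert x (P 2)"
      proof (cases "i = 1")
        case True then show ?thesis using i by simp
      next
        case False then show ?thesis using i pw_P[of i x] P_mono[of 2 i] by auto
      qed
    qed
  qed
  have "b x y \<in> span (insert y S)" using basis0(2)[OF xn y[unfolded S_def]] unfolding S_def by simp
  then obtain a where a: "b x y - sc a y \<in> span S" using span_breakdown_eq by blast
  have mxf: "m x (b x y) = 0"
  proof -
    have "b (m x y) x = m (b x x) y + m x (b y x)" by (rule leib)
    then have "m x (b y x) = 0" using xy by simp
    then show ?thesis using b_anti[of y x] by (simp add: m_negR)
  qed
  have "m x (b x y - sc a y) = 0" by (simp add: m_diffR m_scR mxf xy)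
  then obtain c where "b x y - sc a y = sc c (pw m x (n - 1))"
    using kernel in_Pn1 a SP by blast
  then have bxy: "b x y = sc a y + sc c (pw m x (n - 1))" by (simp add: algebra_simps)
  have mfy: "m (b x y) y = 0"
  proof -
    have "b (m x y) y = m (b x y) y + m x (b y y)" by (rule leib)
    then show ?thesis using xy by simp
  qed
  have pny: "m (pw m x (n - 1)) y = 0" using pw_mult_y[OF xy, of "n - 1"] n3 by simp
  have "m (b x y) y = sc (a * \<beta>) (pw m x (n - 1))"
    unfolding bxy using pny by (simp add: m_addL m_scL yy)
  then have ab: "a * \<beta> = 0" using mfy xn by simp
  obtain t where t: "n = t + 3" using n3 by (metis add.commute less_imp_add_positive numeral_3_eq_3 add_Suc_right)
  have n1: "n - 1 = t + 2" using t by simp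
  note ai = apply_iso[OF xn y[unfolded S_def] xy yy bxy]
  show ?thesis
  proof (cases "\<beta> = 0")
    case b0: True
    show ?thesis
    proof (cases "a = 0")
      case a0: True
      show ?thesis
      proof (cases "c = 0")
        case True
        then show ?thesis using ai[of 1 1 1 0] a0 b0 by auto
      next
        case False
        then show ?thesis using ai[of 1 "1 / c" 3 0] a0 b0 by auto
      qed
    next
      case False
      then show ?thesis using ai[of "1 / a" 1 2 "c / a"] b0 by (auto simp: field_simps)
    qed
  next
    case bn: False
    then have a0: "a = 0" using ab by simp
    show ?thesis
    proof (cases "c = 0")
      case True
      define s where "s = csqrt \<beta>"
      have s: "s ^ 2 = \<beta>" "s \<noteq> 0" unfolding s_def using bn by auto
      have "(1 / s) ^ 2 * \<beta> = 1" using s bn by (simp add: power_divide)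
      then show ?thesis using ai[of 1 "1 / s" 4 0] a0 True s by auto
    next
      case cn: False
      have "c ^ 2 / \<beta> \<noteq> 0" using cn bn by simp
      then obtain l where l: "l \<noteq> 0" "l ^ t = c ^ 2 / \<beta>" using root_exists[of "c ^ 2 / \<beta>" t] t n3 by auto
      define \<mu> where "\<mu> = l ^ (t + 1) / c"
      have mu: "\<mu> \<noteq> 0" unfolding \<mu>_def using l cn bn by simp
      have e1: "\<mu> ^ 2 * \<beta> = l ^ (n - 1)"
      proof -
        have "\<mu> ^ 2 * \<beta> = l ^ t * l ^ (t + 2) * \<beta> / c ^ 2"
          unfolding \<mu>_def by (simp add: power_divide power_mult_distrib power_add power2_eq_square field_simps)
        also have "\<dots> = l ^ (t + 2)" using l bn cn by (simp add: field_simps)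
        finally show ?thesis using n1 by simp
      qed
      have e3: "l * \<mu> * c - l * a * 0 = l ^ (n - 1)"
        unfolding \<mu>_def n1 using cn by (simp add: field_simps power_add power2_eq_square)
      show ?thesis using ai[of l \<mu> 5 0] l mu e1 e3 a0 by auto
    qed
  qed
qed

end

theorem theorem3p9:
  fixes sc :: "complex \<Rightarrow> 'v::ab_group_add \<Rightarrow> 'v"
    and m b :: "'v \<Rightarrow> 'v \<Rightarrow> 'v"
    and n :: nat
  assumes "n > 3"
    and "poisson_algebra sc m b"
    and "n_dimensional sc n"
    and "filiform sc m n"
  shows "\<exists>k\<in>{1..5}. \<exists>f. iso_to_model sc m b n k f"
proof -
  from assms(3) obtain B where B: "finite B" "\<not> module.dependent sc B" "module.span sc B = UNIV" "card B = n"
    unfolding n_dimensional_def by blast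
  have vs: "vector_space sc" using assms(2) unfolding poisson_algebra_def by blast
  interpret PF sc m b B n
  proof -
    interpret vector_space sc by (rule vs)
    show "PF sc m b B n"
      by unfold_locales (use B assms in auto)
  qed
  obtain x where x: "m x x \<notin> alg_pow sc m 3" using exists_sq by blast
  interpret PX sc m b B n x by unfold_locales (rule x)
  show ?thesis by (rule main)
qed

end
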